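(* For every integer $n\ge 1$, the number of lines in $\mathbb{Z}_n^2$ equals $\psi(n^2)$, where $\psi:\mathbb{N}\to\mathbb{N}$ is the multiplicative function with $\psi(1)=1$ and $\psi(p^k)=(p+1)p^{k-1}$ for prime powers $p^k>1$.
   Context: $\mathbb{Z}_n=\mathbb{Z}/n\mathbb{Z}$. A line in $\mathbb{Z}_n^2$ is a translate (as a set) of a cyclic subgroup of order $n$ of the additive group $\mathbb{Z}_n^2$. A function $\psi$ is multiplicative if $\psi(1)=1$ and $\psi(nm)=\psi(n)\psi(m)$ for coprime $n,m$. *)

theory Defs
  imports "HOL-Computational_Algebra.Primes"
begin

text \<open>Z_n^2 is modelled as {0..<n} x {0..<n} with componentwise addition mod n.\<close>

definition cyc :: "nat \<Rightarrow> nat \<Rightarrow> nat \<Rightarrow> (nat \<times> nat) set" where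
  "cyc n a b = {(k * a mod n, k * b mod n) | k. True}"

definition lines :: "nat \<Rightarrow> (nat \<times> nat) set set" where
  "lines n = {L. \<exists>x y a b. x < n \<and> y < n \<and> a < n \<and> b < n \<and>
      card (cyc n a b) = n \<and>
      L = (\<lambda>(u, v). ((x + u) mod n, (y + v) mod n)) ` cyc n a b}"

definition psi :: "nat \<Rightarrow> nat" where
  "psi m = (\<Prod>p\<in>prime_factors m. (p + 1) * p ^ (multiplicity p m - 1))"

end

theory Submission
  imports Defs "HOL-Number_Theory.Number_Theory"
begin

definition Gs :: "nat \<Rightarrow> (nat \<times> nat) set" where
  "Gs n = {(a,b). a < n \<and> b < n \<and> coprime (gcd a b) n}"

lemma finite_Gs: "finite (Gs n)"
  by (rule finite_subset[of _ "{..<n} \<times> {..<n}"]) (auto simp: Gs_def)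

lemma coprime_gcd_iff: "coprime (gcd a b) (m::nat) \<longleftrightarrow> (\<forall>d. d dvd a \<longrightarrow> d dvd b \<longrightarrow> d dvd m \<longrightarrow> d = 1)"
  by (auto simp: coprime_def)

lemma coprime_gcd_mod: "coprime (gcd (a mod m) (b mod m)) (m::nat) \<longleftrightarrow> coprime (gcd a b) m"
  unfolding coprime_gcd_iff by (metis dvd_mod_iff)

lemma bij_crt:
  fixes m1 m2 :: nat
  assumes "coprime m1 m2" "m1 > 0" "m2 > 0"
  shows "bij_betw (\<lambda>x. (x mod m1, x mod m2)) {..<m1*m2} ({..<m1} \<times> {..<m2})"
  unfolding bij_betw_def
proof
  show "inj_on (\<lambda>x. (x mod m1, x mod m2)) {..<m1*m2}"
  proof (intro inj_onI)
    fix x y assume xy0: "x \<in> {..<m1*m2}" "y \<in> {..<m1*m2}"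
                       "(x mod m1, x mod m2) = (y mod m1, y mod m2)"
    hence xy: "x \<in> {..<m1*m2}" "y \<in> {..<m1*m2}"
                       "x mod m1 = y mod m1" "x mod m2 = y mod m2" by auto
    have ex: "\<exists>!z. z < m1 * m2 \<and> [z = x] (mod m1) \<and> [z = x] (mod m2)"
      by (rule binary_chinese_remainder_unique_nat) (insert assms, simp_all)
    have "x < m1 * m2 \<and> [x = x] (mod m1) \<and> [x = x] (mod m2)"
         "y < m1 * m2 \<and> [y = x] (mod m1) \<and> [y = x] (mod m2)"
      using xy assms by (simp_all add: cong_def)
    from this[THEN the1_equality[OF ex]] show "x = y" by simp
  qed
next
  show "(\<lambda>x. (x mod m1, x mod m2)) ` {..<m1*m2} = {..<m1} \<times> {..<m2}"
  proof (rule subset_antisym)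
    show "(\<lambda>x. (x mod m1, x mod m2)) ` {..<m1*m2} \<subseteq> {..<m1} \<times> {..<m2}" using assms by auto
  next
    show "{..<m1} \<times> {..<m2} \<subseteq> (\<lambda>x. (x mod m1, x mod m2)) ` {..<m1*m2}"
    proof
    fix z assume "z \<in> {..<m1} \<times> {..<m2}"
    then obtain a b where ab: "z = (a,b)" "a < m1" "b < m2" by auto
    with binary_chinese_remainder_unique_nat[OF assms(1), of a b] assms obtain x
      where x: "x < m1 * m2" "x mod m1 = a" "x mod m2 = b" by (auto simp: cong_def)
    thus "z \<in> (\<lambda>x. (x mod m1, x mod m2)) ` {..<m1*m2}" using ab by force
    qed
  qed
qed

lemma card_Gs_mult:
  fixes m1 m2 :: nat
  assumes "coprime m1 m2" "m1 > 0" "m2 > 0"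
  shows "card (Gs (m1*m2)) = card (Gs m1) * card (Gs m2)"
proof -
  let ?f = "\<lambda>x. (x mod m1, x mod m2)"
  have bij: "bij_betw ?f {..<m1*m2} ({..<m1} \<times> {..<m2})" by (rule bij_crt[OF assms])
  let ?F = "\<lambda>(a,b). ((a mod m1, b mod m1), (a mod m2, b mod m2))"
  have inj: "inj_on ?F (Gs (m1*m2))"
  proof (intro inj_onI, clarify)
    fix a b c d assume h: "(a,b) \<in> Gs (m1*m2)" "(c,d) \<in> Gs (m1*m2)"
      "a mod m1 = c mod m1" "b mod m1 = d mod m1" "a mod m2 = c mod m2" "b mod m2 = d mod m2"
    have "a = c" using bij_betw_imp_inj_on[OF bij] h by (auto simp: Gs_def inj_on_def)
    moreover have "b = d" using bij_betw_imp_inj_on[OF bij] h by (auto simp: Gs_def inj_on_def)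
    ultimately show "a = c \<and> b = d" by simp
  qed
  have img: "?F ` Gs (m1*m2) = Gs m1 \<times> Gs m2"
  proof safe
    fix a b assume "(a,b) \<in> Gs (m1*m2)"
    hence "coprime (gcd a b) m1" "coprime (gcd a b) m2" by (auto simp: Gs_def)
    thus "(a mod m1, b mod m1) \<in> Gs m1" "(a mod m2, b mod m2) \<in> Gs m2"
      using assms by (auto simp: Gs_def coprime_gcd_mod)
  next
    fix a b c d assume h: "(a,b) \<in> Gs m1" "(c,d) \<in> Gs m2"
    have "(a,c) \<in> ?f ` {..<m1*m2}" using h bij by (auto simp: Gs_def bij_betw_def)
    then obtain x where x: "x < m1*m2" "x mod m1 = a" "x mod m2 = c" by auto
    have "(b,d) \<in> ?f ` {..<m1*m2}" using h bij by (auto simp: Gs_def bij_betw_def)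
    then obtain y where y: "y < m1*m2" "y mod m1 = b" "y mod m2 = d" by auto
    have "coprime (gcd x y) m1" using h x y coprime_gcd_mod[of x m1 y] by (auto simp: Gs_def)
    moreover have "coprime (gcd x y) m2" using h x y coprime_gcd_mod[of x m2 y] by (auto simp: Gs_def)
    ultimately have "(x,y) \<in> Gs (m1*m2)" using x y by (auto simp: Gs_def)
    moreover have "?F (x,y) = ((a,b),(c,d))" using x y by simp
    ultimately show "((a,b),(c,d)) \<in> ?F ` Gs (m1*m2)" by force
  qed
  have "card (Gs (m1*m2)) = card (?F ` Gs (m1*m2))" using card_image[OF inj] by simp
  also have "\<dots> = card (Gs m1) * card (Gs m2)" by (simp add: img card_cartesian_product)
  finally show ?thesis .
qed

lemma card_Gs_prime_power:
  fixes p :: nat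
  assumes p: "prime p" and e: "e > 0"
  shows "card (Gs (p^e)) = p^(2*(e-1)) * (p^2 - 1)"
proof -
  let ?N = "p^e"
  let ?B = "{(a,b). a < ?N \<and> b < ?N \<and> p dvd a \<and> p dvd b}"
  have pe: "?N = p * p^(e-1)" using e by (cases e) auto
  have p0: "p > 0" using p prime_gt_0_nat by blast
  have cop: "coprime (gcd a b) p \<longleftrightarrow> \<not> (p dvd a \<and> p dvd b)" for a b
  proof -
    have "coprime (gcd a b) p \<longleftrightarrow> \<not> p dvd gcd a b"
    proof
      assume c: "coprime (gcd a b) p"
      show "\<not> p dvd gcd a b"
      proof
        assume "p dvd gcd a b"
        hence "is_unit p" using c coprime_common_divisor[of "gcd a b" p p] by auto
        thus False using p by auto
      qed
    next
      assume "\<not> p dvd gcd a b" thus "coprime (gcd a b) p"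
        using p prime_imp_coprime coprime_commute by blast
    qed
    thus ?thesis by simp
  qed
  have G: "Gs ?N = ({..<?N} \<times> {..<?N}) - ?B" using e by (auto simp: Gs_def cop)
  have B: "?B = ((*) p ` {..<p^(e-1)}) \<times> ((*) p ` {..<p^(e-1)})"
  proof safe
    fix a b assume "a < ?N" "b < ?N" "p dvd a" "p dvd b"
    then obtain a' b' where "a = p*a'" "b = p*b'" "p*a' < p * p^(e-1)" "p*b' < p*p^(e-1)" 
      using pe by (auto elim!: dvdE)
    thus "a \<in> (*) p ` {..<p^(e-1)}" "b \<in> (*) p ` {..<p^(e-1)}" by auto
  qed (use p0 in \<open>auto simp: pe\<close>)
  have ci: "card ((*) p ` {..<p^(e-1)}) = p^(e-1)"
    using p0 by (subst card_image) (auto simp: inj_on_def)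
  have cB: "card ?B = (p^(e-1))^2"
    unfolding B card_cartesian_product ci by (simp add: power2_eq_square)
  have fB: "finite ?B" by (rule finite_subset[of _ "{..<?N}\<times>{..<?N}"]) auto
  have "card (Gs ?N) = ?N*?N - card ?B" unfolding G
    by (subst card_Diff_subset) (use fB in \<open>auto simp: card_cartesian_product\<close>)
  also have "\<dots> = (p*p^(e-1))*(p*p^(e-1)) - (p^(e-1))^2" using cB pe by simp
  also have "\<dots> = (p^(e-1))^2 * (p^2-1)" by (simp add: power2_eq_square algebra_simps diff_mult_distrib2)
  also have "(p^(e-1))^2 = p^(2*(e-1))" by (metis power_mult mult.commute)
  
  finally show ?thesis .
qed

lemma card_Gs_prod_coprime:
  assumes "pairwise coprime (f ` A)" "inj_on f A" "\<And>a. a \<in> A \<Longrightarrow> f a > 0"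
  shows   "card (Gs (prod f A)) = (\<Prod>a\<in>A. card (Gs (f a)))"
  using assms
proof (induction A rule: infinite_finite_induct)
  case (insert x A)
  have *: "coprime (prod f A) (f x)"
  proof (rule prod_coprime_left)
    fix y
    assume "y \<in> A"
    with \<open>x \<notin> A\<close> have "y \<noteq> x"
      by auto
    with \<open>x \<notin> A\<close> \<open>y \<in> A\<close> \<open>inj_on f (insert x A)\<close> have "f y \<noteq> f x"
      using inj_onD [of f "insert x A" y x]
      by auto
    with \<open>y \<in> A\<close> show "coprime (f y) (f x)"
      using pairwiseD [OF \<open>pairwise coprime (f ` insert x A)\<close>]
      by auto
  qed
  from insert.hyps have "prod f (insert x A) = prod f A * f x" by simp
  also have "card (Gs \<dots>) = card (Gs (prod f A)) * card (Gs (f x))"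
    using insert.hyps insert.prems by (intro card_Gs_mult * ) (auto intro: prod_pos)
  also have "card (Gs (prod f A)) = (\<Prod>a\<in>A. card (Gs (f a)))" 
    using insert.prems by (intro insert.IH) (auto dest: pairwise_subset)
  also from insert.hyps have "\<dots> * card (Gs (f x)) = (\<Prod>a\<in>insert x A. card (Gs (f a)))" by simp
  finally show ?case .
qed (simp_all add: Gs_def)

lemma card_Gs_formula:
  assumes "n > 0"
  shows   "card (Gs n) = (\<Prod>p\<in>prime_factors n. p ^ (2*(multiplicity p n - 1)) * (p^2 - 1))"
proof -
  from assms have "n = (\<Prod>p\<in>prime_factors n. p ^ multiplicity p n)"
    by (rule prime_factorization_nat)
  also have "card (Gs \<dots>) = (\<Prod>x\<in>prime_factors n. card (Gs (x ^ multiplicity x n)))"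
  proof (rule card_Gs_prod_coprime)
    show "pairwise coprime ((\<lambda>p. p ^ multiplicity p n) ` prime_factors n)"
    proof (rule pairwiseI, clarify)
      fix p q assume *: "p \<in># prime_factorization n" "q \<in># prime_factorization n" 
                     "p ^ multiplicity p n \<noteq> q ^ multiplicity q n"
      then have "multiplicity p n > 0" "multiplicity q n > 0"
        by (simp_all add: prime_factors_multiplicity)
      with * primes_coprime [of p q] show "coprime (p ^ multiplicity p n) (q ^ multiplicity q n)"
        by auto
    qed
  next
    show "inj_on (\<lambda>p. p ^ multiplicity p n) (prime_factors n)"
    proof
      fix p q assume pq: "p \<in># prime_factorization n" "q \<in># prime_factorization n" 
                         "p ^ multiplicity p n = q ^ multiplicity q n"
      from assms and pq have "prime p" "prime q" "multiplicity p n > 0" 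
        by (simp_all add: prime_factors_multiplicity)
      from prime_power_eq_imp_eq[OF this pq(3)] show "p = q" .
    qed
  next
    fix p assume "p \<in> prime_factors n"
    thus "p ^ multiplicity p n > 0" by (auto intro: prime_gt_0_nat)
  qed
  also have "\<dots> = (\<Prod>p\<in>prime_factors n. p ^ (2*(multiplicity p n - 1)) * (p^2 - 1))"
    by (intro prod.cong refl card_Gs_prime_power) (auto simp: prime_factors_multiplicity)
  finally show ?thesis .
qed

lemma key_identity:
  assumes "n > 0"
  shows "n * card (Gs n) = psi (n^2) * totient n"
proof -
  have n: "n = (\<Prod>p\<in>prime_factors n. p ^ multiplicity p n)"
    using assms by (rule prime_factorization_nat)
  have pf: "prime_factors (n^2) = prime_factors n" by (simp add: prime_factors_power)
  have mul: "multiplicity p (n^2) = 2 * multiplicity p n" if "p \<in> prime_factors n" for p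
    using that assms by (intro prime_elem_multiplicity_power_distrib) auto
  have ps: "psi (n^2) = (\<Prod>p\<in>prime_factors n. (p + 1) * p ^ (2 * multiplicity p n - 1))"
    unfolding psi_def pf by (intro prod.cong refl) (simp add: mul)
  have fac: "p ^ multiplicity p n * (p ^ (2*(multiplicity p n - 1)) * (p^2 - 1)) =
      (p + 1) * p ^ (2 * multiplicity p n - 1) * (p ^ (multiplicity p n - 1) * (p - 1))"
    if "p \<in> prime_factors n" for p
  proof -
    have "multiplicity p n > 0" using that by (simp add: prime_factors_multiplicity)
    then obtain f where f: "multiplicity p n = Suc f" by (cases "multiplicity p n") auto
    have sq: "p^2 - 1 = (p+1)*(p-1)" by (simp add: power2_eq_square algebra_simps diff_mult_distrib2)
    show ?thesis unfolding f sq by (simp add: algebra_simps power_add power_mult_distrib power2_eq_square)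
  qed
  have "n * card (Gs n) = (\<Prod>p\<in>prime_factors n. p ^ multiplicity p n) * (\<Prod>p\<in>prime_factors n. p ^ (2*(multiplicity p n - 1)) * (p^2 - 1))"
    using n card_Gs_formula[OF assms] by metis
  also have "\<dots> = (\<Prod>p\<in>prime_factors n. p ^ multiplicity p n * (p ^ (2*(multiplicity p n - 1)) * (p^2 - 1)))"
    by (simp add: prod.distrib)
  also have "\<dots> = (\<Prod>p\<in>prime_factors n. (p + 1) * p ^ (2 * multiplicity p n - 1) * (p ^ (multiplicity p n - 1) * (p - 1)))"
    by (intro prod.cong refl fac)
  also have "\<dots> = psi (n^2) * totient n"
    by (simp add: ps totient_formula1[OF assms] prod.distrib)
  finally show ?thesis .
qed


definition tr :: "nat \<Rightarrow> nat \<times> nat \<Rightarrow> nat \<times> nat \<Rightarrow> nat \<times> nat" where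
  "tr n p q = ((fst p + fst q) mod n, (snd p + snd q) mod n)"

lemma cyc_image: "n > 0 \<Longrightarrow> cyc n a b = (\<lambda>k. (k*a mod n, k*b mod n)) ` {..<n}"
proof (rule subset_antisym)
  assume n: "n > 0"
  show "cyc n a b \<subseteq> (\<lambda>k. (k*a mod n, k*b mod n)) ` {..<n}"
  proof
    fix z assume "z \<in> cyc n a b"
    then obtain k where z: "z = (k*a mod n, k*b mod n)" by (auto simp: cyc_def)
    have "z = ((k mod n)*a mod n, (k mod n)*b mod n)" unfolding z by (simp add: mod_mult_left_eq)
    moreover have "k mod n < n" using n by simp
    ultimately show "z \<in> (\<lambda>k. (k*a mod n, k*b mod n)) ` {..<n}" by blast
  qed
qed (auto simp: cyc_def)

lemma finite_cyc: "n > 0 \<Longrightarrow> finite (cyc n a b)"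
  by (simp add: cyc_image)

lemma cyc_sub: "n > 0 \<Longrightarrow> cyc n a b \<subseteq> {..<n} \<times> {..<n}"
  by (auto simp: cyc_def)

lemma mem_cyc_int:
  assumes n: "n > 0"
  shows "(u,v) \<in> cyc n a b \<longleftrightarrow> u < n \<and> v < n \<and>
     (\<exists>k::int. int u = (k * int a) mod int n \<and> int v = (k * int b) mod int n)"
proof
  assume "(u,v) \<in> cyc n a b"
  then obtain k where "u = k*a mod n" "v = k*b mod n" by (auto simp: cyc_def)
  thus "u < n \<and> v < n \<and> (\<exists>k::int. int u = (k * int a) mod int n \<and> int v = (k * int b) mod int n)"
    using n by (intro conjI exI[of _ "int k"]) (auto simp: of_nat_mod)
next
  assume "u < n \<and> v < n \<and> (\<exists>k::int. int u = (k * int a) mod int n \<and> int v = (k * int b) mod int n)"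
  then obtain k :: int where k: "int u = (k * int a) mod int n" "int v = (k * int b) mod int n" by auto
  define k' where "k' = nat (k mod int n)"
  have ik: "int k' = k mod int n" using n unfolding k'_def by simp
  have "int (k'*a mod n) = int u" unfolding k(1) by (simp add: of_nat_mod ik mod_mult_left_eq)
  moreover have "int (k'*b mod n) = int v" unfolding k(2) by (simp add: of_nat_mod ik mod_mult_left_eq)
  ultimately show "(u,v) \<in> cyc n a b" unfolding cyc_def by auto
qed

lemma zero_cyc: "(0,0) \<in> cyc n a b"
  unfolding cyc_def by (auto intro: exI[of _ 0])

lemma self_cyc: "a < n \<Longrightarrow> b < n \<Longrightarrow> (a,b) \<in> cyc n a b"
  unfolding cyc_def by (auto intro: exI[of _ 1])

lemma cyc_closed:
  assumes n: "n > 0" and h: "h \<in> cyc n a b" and s: "s \<in> cyc n a b"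
  shows "tr n h s \<in> cyc n a b"
proof -
  obtain h1 h2 s1 s2 where hs: "h = (h1,h2)" "s = (s1,s2)" by (cases h, cases s)
  from h obtain k where k: "int h1 = (k * int a) mod int n" "int h2 = (k * int b) mod int n"
    using mem_cyc_int[OF n] hs by auto
  from s obtain j where j: "int s1 = (j * int a) mod int n" "int s2 = (j * int b) mod int n"
    using mem_cyc_int[OF n] hs by auto
  have "int ((h1 + s1) mod n) = ((k+j) * int a) mod int n"
    by (simp add: of_nat_mod k j mod_add_eq distrib_right)
  moreover have "int ((h2 + s2) mod n) = ((k+j) * int b) mod int n"
    by (simp add: of_nat_mod k j mod_add_eq distrib_right)
  ultimately show ?thesis using n unfolding hs tr_def mem_cyc_int[OF n] by auto
qed

lemma cyc_sub_closed:
  assumes n: "n > 0" and h: "h \<in> cyc n a b" and w: "w \<in> {..<n}\<times>{..<n}" and hw: "tr n h w \<in> cyc n a b"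
  shows "w \<in> cyc n a b"
proof -
  obtain h1 h2 w1 w2 where hs: "h = (h1,h2)" "w = (w1,w2)" by (cases h, cases w)
  from h obtain k where k: "int h1 = (k * int a) mod int n" "int h2 = (k * int b) mod int n"
    using mem_cyc_int[OF n] hs by auto
  from hw obtain j where j: "int ((h1+w1) mod n) = (j * int a) mod int n" "int ((h2+w2) mod n) = (j * int b) mod int n"
    using mem_cyc_int[OF n] hs by (auto simp: tr_def)
  have w1: "int w1 = int w1 mod int n" "int w2 = int w2 mod int n" using w hs by auto
  have "int w1 = (int h1 + int w1 - int h1) mod int n" using w1 by simp
  also have "\<dots> = (int ((h1+w1) mod n) - int h1) mod int n" by (simp add: of_nat_mod mod_diff_left_eq)
  also have "\<dots> = ((j - k) * int a) mod int n" unfolding j k by (simp add: mod_diff_eq left_diff_distrib)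
  finally have e1: "int w1 = ((j - k) * int a) mod int n" .
  have "int w2 = (int h2 + int w2 - int h2) mod int n" using w1 by simp
  also have "\<dots> = (int ((h2+w2) mod n) - int h2) mod int n" by (simp add: of_nat_mod mod_diff_left_eq)
  also have "\<dots> = ((j - k) * int b) mod int n" unfolding j k by (simp add: mod_diff_eq left_diff_distrib)
  finally have e2: "int w2 = ((j - k) * int b) mod int n" .
  show ?thesis using e1 e2 w unfolding hs mem_cyc_int[OF n] by auto
qed

lemma tr_tr: "tr n p (tr n h s) = tr n (tr n p h) s"
  by (simp add: tr_def mod_add_right_eq mod_add_left_eq add.assoc)

lemma tr_zero: "p \<in> {..<n}\<times>{..<n} \<Longrightarrow> tr n p (0,0) = p"
  by (auto simp: tr_def)

lemma inj_tr: "inj_on (tr n p) ({..<n}\<times>{..<n})"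
proof (rule inj_onI)
  fix u w assume u: "u \<in> {..<n}\<times>{..<n}" and w: "w \<in> {..<n}\<times>{..<n}" and e: "tr n p u = tr n p w"
  have "[fst p + fst u = fst p + fst w] (mod n)" "[snd p + snd u = snd p + snd w] (mod n)"
    using e by (auto simp: tr_def cong_def)
  hence "[fst u = fst w] (mod n)" "[snd u = snd w] (mod n)" by (auto simp: cong_add_lcancel_nat)
  hence "fst u = fst w" "snd u = snd w" using u w by (auto simp: cong_def)
  thus "u = w" by (simp add: prod_eq_iff)
qed

lemma tr_range: "n > 0 \<Longrightarrow> tr n p q \<in> {..<n}\<times>{..<n}"
  by (simp add: tr_def)

lemma kernel:
  fixes x :: int and a b n :: nat
  assumes "int n dvd x * int a" "int n dvd x * int b" "coprime (gcd a b) n"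
  shows "int n dvd x"
proof -
  have "int n dvd gcd (x * int a) (x * int b)" using assms by simp
  also have "gcd (x * int a) (x * int b) = \<bar>x\<bar> * int (gcd a b)"
    using gcd_mult_distrib_int[of x "int a" "int b"] by (simp add: gcd_int_int_eq)
  finally have "int n dvd \<bar>x\<bar> * int (gcd a b)" .
  hence "int n dvd x * int (gcd a b)" by (metis abs_mult abs_of_nat dvd_abs_iff)
  moreover have "coprime (int n) (int (gcd a b))" using assms(3) by (simp add: coprime_commute)
  ultimately show ?thesis using coprime_dvd_mult_left_iff by blast
qed

lemma inj_gen:
  fixes a b n :: nat
  assumes n: "n > 0" and c: "coprime (gcd a b) n"
  shows "inj_on (\<lambda>k. (k*a mod n, k*b mod n)) {..<n}"
proof (rule inj_onI)
  fix k k' assume k: "k \<in> {..<n}" "k' \<in> {..<n}" and e: "(k*a mod n, k*b mod n) = (k'*a mod n, k'*b mod n)"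
  have "int (k*a mod n) = int (k'*a mod n)" "int (k*b mod n) = int (k'*b mod n)" using e by auto
  hence "(int k * int a) mod int n = (int k' * int a) mod int n" "(int k * int b) mod int n = (int k' * int b) mod int n"
    by (simp_all add: of_nat_mod)
  hence "int n dvd int k * int a - int k' * int a" "int n dvd int k * int b - int k' * int b"
    by (simp_all only: mod_eq_dvd_iff)
  hence "int n dvd (int k - int k') * int a" "int n dvd (int k - int k') * int b"
    by (simp_all only: left_diff_distrib)
  hence d: "int n dvd (int k - int k')" by (rule kernel[OF _ _ c])
  show "k = k'"
  proof (rule ccontr)
    assume "k \<noteq> k'"
    hence "int k - int k' \<noteq> 0" by simp
    from dvd_imp_le_int[OF this d] have "int n \<le> \<bar>int k - int k'\<bar>" by simp
    moreover have "\<bar>int k - int k'\<bar> < int n" using k by auto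
    ultimately show False by linarith
  qed
qed

lemma card_cyc_if:
  assumes n: "n > 0" and c: "coprime (gcd a b) n" shows "card (cyc n a b) = n"
proof -
  have "card ((\<lambda>k. (k*a mod n, k*b mod n)) ` {..<n}) = card {..<n}" by (rule card_image[OF inj_gen[OF n c]])
  thus ?thesis by (simp add: cyc_image[OF n])
qed

lemma card_cyc_only_if:
  assumes n: "n > 0" and cd: "card (cyc n a b) = n"
  shows "coprime (gcd a b) n"
proof (rule ccontr)
  have "card ((\<lambda>k. (k*a mod n, k*b mod n)) ` {..<n}) = card {..<n}" using cd by (simp add: cyc_image[OF n])
  hence inj: "inj_on (\<lambda>k. (k*a mod n, k*b mod n)) {..<n}"
    using inj_on_iff_eq_card[OF finite_lessThan[of n]] by blast
  define g where "g = gcd (gcd a b) n"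
  assume "\<not> coprime (gcd a b) n"
  hence g1: "g \<noteq> 1" unfolding g_def using coprime_iff_gcd_eq_1 by blast
  have gn: "g dvd n" "g dvd a" "g dvd b" unfolding g_def by (metis gcd_dvd1 gcd_dvd2 dvd_trans)+
  have g0: "g > 0" unfolding g_def gcd_pos_nat using n by blast
  obtain d where d: "n = g * d" using gn by (auto elim: dvdE)
  have d0: "d > 0" using d n by (metis mult_0_right neq0_conv)
  have g2: "g \<ge> 2" using g0 g1 by linarith
  have "1*d < g*d" using g2 d0 by (intro mult_strict_right_mono) auto
  hence dn: "d < n" using d by simp
  obtain a' where a': "a = g*a'" using gn by (auto elim: dvdE)
  obtain b' where b': "b = g*b'" using gn by (auto elim: dvdE)
  have "d*a = n*a'" "d*b = n*b'" unfolding a' b' d by simp_all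
  hence "(d*a mod n, d*b mod n) = (0*a mod n, 0*b mod n)" by simp
  moreover have "d \<in> {..<n}" "0 \<in> {..<n}" using dn n by auto
  ultimately have "d = 0" by (rule inj_onD[OF inj])
  thus False using d0 by simp
qed

lemma card_cyc_iff:
  assumes n: "n > 0"
  shows "card (cyc n a b) = n \<longleftrightarrow> coprime (gcd a b) n"
  using card_cyc_if[OF n] card_cyc_only_if[OF n] by blast

lemma gen_in_G:
  fixes a b n k :: nat
  assumes n: "n > 0" and c: "coprime (gcd a b) n"
  shows "(k*a mod n, k*b mod n) \<in> Gs n \<longleftrightarrow> coprime k n"
proof -
  have "(k*a mod n, k*b mod n) \<in> Gs n \<longleftrightarrow> coprime (gcd (k*a mod n) (k*b mod n)) n"
    using n unfolding Gs_def by auto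
  also have "\<dots> \<longleftrightarrow> coprime (gcd (k*a) (k*b)) n" by (rule coprime_gcd_mod)
  also have "\<dots> \<longleftrightarrow> coprime (k * gcd a b) n" by (simp only: gcd_mult_distrib_nat)
  also have "\<dots> \<longleftrightarrow> coprime k n" using c coprime_mult_left_iff by blast
  finally show ?thesis .
qed

lemma cyc_eq:
  assumes n: "n > 0" and ab: "coprime (gcd a b) n" and cd: "coprime (gcd c d) n"
    and m: "(c,d) \<in> cyc n a b"
  shows "cyc n c d = cyc n a b"
proof (rule card_subset_eq)
  show "finite (cyc n a b)" using n by (rule finite_cyc)
  show "card (cyc n c d) = card (cyc n a b)" using card_cyc_iff[OF n, of a b] card_cyc_iff[OF n, of c d] ab cd by simp
  obtain j where j: "c = j*a mod n" "d = j*b mod n" using m by (auto simp: cyc_def)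
  show "cyc n c d \<subseteq> cyc n a b"
  proof
    fix z assume "z \<in> cyc n c d"
    then obtain k where z: "z = (k*c mod n, k*d mod n)" by (auto simp: cyc_def)
    have "z = ((k*j)*a mod n, (k*j)*b mod n)" unfolding z j by (simp add: mod_mult_right_eq mult.assoc)
    thus "z \<in> cyc n a b" by (auto simp: cyc_def)
  qed
qed

lemma gens:
  assumes n: "n > 0" and ab: "coprime (gcd a b) n"
  shows "Gs n \<inter> cyc n a b = (\<lambda>k. (k*a mod n, k*b mod n)) ` totatives n"
proof (rule subset_antisym)
  show "Gs n \<inter> cyc n a b \<subseteq> (\<lambda>k. (k*a mod n, k*b mod n)) ` totatives n"
  proof
    fix z assume z: "z \<in> Gs n \<inter> cyc n a b"
    then obtain k where k: "k < n" "z = (k*a mod n, k*b mod n)" unfolding cyc_image[OF n] by auto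
    hence ck: "coprime k n" using gen_in_G[OF n ab] z by auto
    show "z \<in> (\<lambda>k. (k*a mod n, k*b mod n)) ` totatives n"
    proof (cases "k = 0")
      case True
      hence "n = 1" using ck by simp
      thus ?thesis using k by (auto intro: image_eqI[of _ _ 1])
    next
      case False
      hence "k \<in> totatives n" using k ck by (auto simp: in_totatives_iff)
      thus ?thesis using k by auto
    qed
  qed
next
  show "(\<lambda>k. (k*a mod n, k*b mod n)) ` totatives n \<subseteq> Gs n \<inter> cyc n a b"
  proof
    fix z assume "z \<in> (\<lambda>k. (k*a mod n, k*b mod n)) ` totatives n"
    then obtain k where k: "k \<in> totatives n" "z = (k*a mod n, k*b mod n)" by auto
    have "coprime k n" using k by (simp add: in_totatives_iff)
    thus "z \<in> Gs n \<inter> cyc n a b" using gen_in_G[OF n ab] k by (auto simp: cyc_def)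
  qed
qed

lemma tot_aux: "0 < (k::nat) \<Longrightarrow> k \<le> n \<Longrightarrow> k = (if k mod n = 0 then n else k mod n)"
  by (cases "k = n") auto

lemma card_gens:
  assumes n: "n > 0" and ab: "coprime (gcd a b) n"
  shows "card (Gs n \<inter> cyc n a b) = totient n"
proof -
  have "inj_on (\<lambda>k. (k*a mod n, k*b mod n)) (totatives n)"
  proof (rule inj_onI)
    fix k k' assume k: "k \<in> totatives n" "k' \<in> totatives n"
      and e: "(k*a mod n, k*b mod n) = (k'*a mod n, k'*b mod n)"
    have m: "(k mod n)*a mod n = k*a mod n" "(k mod n)*b mod n = k*b mod n"
       "(k' mod n)*a mod n = k'*a mod n" "(k' mod n)*b mod n = k'*b mod n"
      by (rule mod_mult_left_eq)+
    have "((k mod n)*a mod n, (k mod n)*b mod n) = ((k' mod n)*a mod n, (k' mod n)*b mod n)"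
      unfolding m by (rule e)
    moreover have "k mod n \<in> {..<n}" "k' mod n \<in> {..<n}" using n by auto
    ultimately have km: "k mod n = k' mod n" by (rule inj_onD[OF inj_gen[OF n ab]])
    have "0 < k" "k \<le> n" "0 < k'" "k' \<le> n" using k by (auto simp: in_totatives_iff)
    hence "k = (if k mod n = 0 then n else k mod n)" "k' = (if k' mod n = 0 then n else k' mod n)"
      using tot_aux by blast+
    thus "k = k'" using km by metis
  qed
  hence "card ((\<lambda>k. (k*a mod n, k*b mod n)) ` totatives n) = card (totatives n)" by (rule card_image)
  thus ?thesis unfolding gens[OF n ab] totient_def .
qed

definition FF :: "nat \<Rightarrow> (nat \<times> nat) \<times> (nat \<times> nat) \<Rightarrow> (nat \<times> nat) set" where
  "FF n z = tr n (fst z) ` cyc n (fst (snd z)) (snd (snd z))"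

lemma lines_eq:
  assumes n: "n > 0"
  shows "lines n = FF n ` (({..<n}\<times>{..<n}) \<times> Gs n)"
proof -
  have tr: "(\<lambda>(u, v). ((x + u) mod n, (y + v) mod n)) = tr n (x,y)" for x y
    by (auto simp: tr_def)
  show ?thesis
  proof (rule subset_antisym)
    show "lines n \<subseteq> FF n ` (({..<n}\<times>{..<n}) \<times> Gs n)"
    proof
      fix L assume "L \<in> lines n"
      then obtain x y a b where h: "x < n" "y < n" "a < n" "b < n" "card (cyc n a b) = n"
        "L = tr n (x,y) ` cyc n a b" unfolding lines_def tr by blast
      hence "(a,b) \<in> Gs n" using card_cyc_iff[OF n] by (auto simp: Gs_def)
      moreover have "L = FF n ((x,y),(a,b))" using h by (simp add: FF_def)
      ultimately show "L \<in> FF n ` (({..<n}\<times>{..<n}) \<times> Gs n)" using h by blast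
    qed
  next
    show "FF n ` (({..<n}\<times>{..<n}) \<times> Gs n) \<subseteq> lines n"
    proof
      fix L assume "L \<in> FF n ` (({..<n}\<times>{..<n}) \<times> Gs n)"
      then obtain x y a b where h: "x < n" "y < n" "(a,b) \<in> Gs n" "L = FF n ((x,y),(a,b))" by auto
      hence "a < n" "b < n" "card (cyc n a b) = n" using card_cyc_iff[OF n] by (auto simp: Gs_def)
      thus "L \<in> lines n" unfolding lines_def tr using h by (auto simp: FF_def)
    qed
  qed
qed

lemma fibre:
  assumes n: "n > 0" and p0: "p0 \<in> {..<n}\<times>{..<n}" and g0: "g0 \<in> Gs n"
  defines "H \<equiv> cyc n (fst g0) (snd g0)"
  shows "{z \<in> ({..<n}\<times>{..<n}) \<times> Gs n. FF n z = FF n (p0,g0)} = (tr n p0 ` H) \<times> (Gs n \<inter> H)"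
proof -
  let ?P = "{..<n}\<times>{..<n}"
  have cg0: "coprime (gcd (fst g0) (snd g0)) n" using g0 by (auto simp: Gs_def)
  have HP: "H \<subseteq> ?P" unfolding H_def by (rule cyc_sub[OF n])
  have Hc: "card H = n" unfolding H_def using card_cyc_if[OF n cg0] .
  have fH: "finite H" unfolding H_def by (rule finite_cyc[OF n])
  have shift: "tr n h ` H = H" if h: "h \<in> H" for h
  proof (rule card_subset_eq[OF fH])
    show "tr n h ` H \<subseteq> H" using cyc_closed[OF n] h unfolding H_def by blast
    show "card (tr n h ` H) = card H" using inj_on_subset[OF inj_tr HP] by (rule card_image)
  qed
  have key: "z \<in> {z \<in> ?P \<times> Gs n. FF n z = FF n (p0,g0)} \<longleftrightarrow> z \<in> (tr n p0 ` H) \<times> (Gs n \<inter> H)" for z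
  proof -
    obtain p g where z: "z = (p,g)" by (cases z)
    show "z \<in> {z \<in> ?P \<times> Gs n. FF n z = FF n (p0,g0)} \<longleftrightarrow> z \<in> (tr n p0 ` H) \<times> (Gs n \<inter> H)"
    proof
      assume "z \<in> {z \<in> ?P \<times> Gs n. FF n z = FF n (p0,g0)}"
      hence pP: "p \<in> ?P" and gG: "g \<in> Gs n" and e: "tr n p ` cyc n (fst g) (snd g) = tr n p0 ` H"
        unfolding z FF_def H_def by auto
      define H' where "H' = cyc n (fst g) (snd g)"
      have cg: "coprime (gcd (fst g) (snd g)) n" using gG by (auto simp: Gs_def)
      have H'P: "H' \<subseteq> ?P" unfolding H'_def by (rule cyc_sub[OF n])
      have "p = tr n p (0,0)" using tr_zero[OF pP] by simp
      moreover have "(0,0) \<in> H'" unfolding H'_def by (rule zero_cyc)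
      ultimately have "p \<in> tr n p ` H'" by blast
      hence "p \<in> tr n p0 ` H" using e unfolding H'_def by simp
      then obtain h where hH: "h \<in> H" and ph: "p = tr n p0 h" by blast
      have "tr n p ` H' = tr n p0 ` (tr n h ` H')" unfolding ph image_image tr_tr ..
      hence e2: "tr n p0 ` (tr n h ` H') = tr n p0 ` H" using e unfolding H'_def by simp
      have sub: "tr n h ` H' \<subseteq> ?P" using tr_range[OF n] by blast
      have eq: "tr n h ` H' = H" by (rule iffD1[OF inj_on_image_eq_iff[OF inj_tr sub HP] e2])
      have "H' \<subseteq> H"
      proof
        fix s assume s: "s \<in> H'"
        hence "tr n h s \<in> H" using eq by blast
        moreover have "s \<in> ?P" using s H'P by blast
        ultimately show "s \<in> H" unfolding H_def using cyc_sub_closed[OF n] hH unfolding H_def by blast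
      qed
      moreover have "card H' = card H" unfolding H'_def Hc using card_cyc_if[OF n cg] .
      ultimately have HH: "H' = H" using card_subset_eq[OF fH] by blast
      have "g \<in> H'" unfolding H'_def using gG self_cyc[of "fst g" n "snd g"] by (auto simp: Gs_def)
      thus "z \<in> (tr n p0 ` H) \<times> (Gs n \<inter> H)" using HH gG \<open>p \<in> tr n p0 ` H\<close> z by blast
    next
      assume "z \<in> (tr n p0 ` H) \<times> (Gs n \<inter> H)"
      hence pL: "p \<in> tr n p0 ` H" and gG: "g \<in> Gs n" and gH: "g \<in> H" unfolding z by auto
      then obtain h where hH: "h \<in> H" and ph: "p = tr n p0 h" by blast
      have cg: "coprime (gcd (fst g) (snd g)) n" using gG by (auto simp: Gs_def)
      have cgH: "cyc n (fst g) (snd g) = H" unfolding H_def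
        using cyc_eq[OF n cg0 cg] gH unfolding H_def by simp
      have "FF n z = tr n p ` H" unfolding z FF_def using cgH by simp
      also have "\<dots> = tr n p0 ` (tr n h ` H)" unfolding ph image_image tr_tr ..
      also have "\<dots> = tr n p0 ` H" using shift[OF hH] by simp
      finally have "FF n z = FF n (p0,g0)" unfolding FF_def H_def by simp
      moreover have "p \<in> ?P" unfolding ph using tr_range[OF n] .
      ultimately show "z \<in> {z \<in> ?P \<times> Gs n. FF n z = FF n (p0,g0)}" using z gG by blast
    qed
  qed
  show ?thesis using key by blast
qed

lemma card_fibre:
  assumes n: "n > 0" and p0: "p0 \<in> {..<n}\<times>{..<n}" and g0: "g0 \<in> Gs n"
  shows "card {z \<in> ({..<n}\<times>{..<n}) \<times> Gs n. FF n z = FF n (p0,g0)} = n * totient n"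
proof -
  have cg0: "coprime (gcd (fst g0) (snd g0)) n" using g0 by (auto simp: Gs_def)
  have "card (tr n p0 ` cyc n (fst g0) (snd g0)) = card (cyc n (fst g0) (snd g0))"
    using inj_on_subset[OF inj_tr cyc_sub[OF n]] by (rule card_image)
  also have "\<dots> = n" using card_cyc_if[OF n cg0] .
  finally show ?thesis unfolding fibre[OF n p0 g0] card_cartesian_product card_gens[OF n cg0] by simp
qed

lemma card_lines_mult:
  assumes n: "n > 0"
  shows "card (lines n) * (n * totient n) = n * n * card (Gs n)"
proof -
  let ?A = "({..<n}\<times>{..<n}) \<times> Gs n"
  have fA: "finite ?A" using finite_Gs by simp
  have "card ?A = (\<Sum>z\<in>?A. 1)" by simp
  also have "\<dots> = (\<Sum>L\<in>FF n ` ?A. (\<Sum>z\<in>{z. z \<in> ?A \<and> FF n z = L}. 1))"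
    by (rule sum.image_gen[OF fA])
  also have "\<dots> = (\<Sum>L\<in>FF n ` ?A. n * totient n)"
  proof (rule sum.cong[OF refl])
    fix L assume "L \<in> FF n ` ?A"
    then obtain p0 g0 where h: "p0 \<in> {..<n}\<times>{..<n}" "g0 \<in> Gs n" "L = FF n (p0,g0)" by auto
    have "(\<Sum>z\<in>{z. z \<in> ?A \<and> FF n z = L}. 1) = card {z \<in> ?A. FF n z = FF n (p0,g0)}"
      using h(3) by simp
    also have "\<dots> = n * totient n" by (rule card_fibre[OF n h(1,2)])
    finally show "(\<Sum>z\<in>{z. z \<in> ?A \<and> FF n z = L}. 1) = n * totient n" .
  qed
  also have "\<dots> = card (lines n) * (n * totient n)" by (simp add: lines_eq[OF n])
  finally have c1: "card ?A = card (lines n) * (n * totient n)" .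
  have c2: "card ?A = n * n * card (Gs n)" by (simp add: card_cartesian_product)
  show ?thesis using c1 c2 by metis
qed


theorem mainTheorem7:
  fixes n :: nat
  assumes "n \<ge> 1"
  shows "card (lines n) = psi (n ^ 2)"
proof -
  have n: "n > 0" using assms by simp
  have t: "totient n > 0" using n by simp
  have "card (lines n) * (n * totient n) = n * (n * card (Gs n))"
    using card_lines_mult[OF n] by (simp add: mult.assoc)
  also have "\<dots> = n * (psi (n^2) * totient n)" using key_identity[OF n] by simp
  also have "\<dots> = psi (n^2) * (n * totient n)" by (simp add: algebra_simps)
  finally have "card (lines n) * (n * totient n) = psi (n^2) * (n * totient n)" .
  moreover have "n * totient n > 0" using n t by simp
  ultimately show ?thesis by simp
qed

end
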